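(* For $c\in\{1,2,4,5,7\}$ there is no set $C\subset V(\tfrac12 H_{24})$ whose characteristic function $\chi_C$ is a perfect coloring of $\tfrac12 H_{24}$ with parameters $((20+c,\,256-c)(c,\,276-c))$.
   Context: $E^n$ is the set of binary words of length $n$; the (Hamming) distance between two words is the number of positions where they differ, and the weight of a word is its number of ones. The halved $24$-cube $\tfrac12 H_{24}$ is the graph whose vertices are the even-weight words of $E^{24}$, two of them adjacent iff they are at Hamming distance exactly $2$ (it is regular of degree $276$). For a graph $G$ and a set $C$ with $\emptyset\neq C\subsetneq V(G)$, the characteristic function $\chi_C$ is a perfect coloring with parameters $((a,b)(c,d))$ if every vertex of $C$ has exactly $a$ neighbours in $C$ and exactly $b$ neighbours outside $C$, and every vertex outside $C$ has exactly $c$ neighbours in $C$ and exactly $d$ neighbours outside $C$. *)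

theory Defs
  imports Main
begin

text \<open>Binary words of length n are represented as subsets of {0..<n} (the support,
  i.e. the set of positions holding a one).\<close>

definition words :: "nat \<Rightarrow> nat set set" where
  "words n = Pow {..<n}"

definition weight :: "nat set \<Rightarrow> nat" where
  "weight x = card x"

definition hamming_dist :: "nat set \<Rightarrow> nat set \<Rightarrow> nat" where
  "hamming_dist x y = card ((x - y) \<union> (y - x))"

definition halved_cube_vertices :: "nat \<Rightarrow> nat set set" where
  "halved_cube_vertices n = {x \<in> words n. even (weight x)}"

definition halved_cube_adj :: "nat set \<Rightarrow> nat set \<Rightarrow> bool" where
  "halved_cube_adj x y \<longleftrightarrow> hamming_dist x y = 2"

definition perfect_coloring ::
  "'v set \<Rightarrow> ('v \<Rightarrow> 'v \<Rightarrow> bool) \<Rightarrow> 'v set \<Rightarrow> nat \<Rightarrow> nat \<Rightarrow> nat \<Rightarrow> nat \<Rightarrow> bool" where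
  "perfect_coloring V adj C a b c d \<longleftrightarrow>
     C \<noteq> {} \<and> C \<subset> V \<and>
     (\<forall>x\<in>C. card {y \<in> C. adj x y} = a \<and> card {y \<in> V - C. adj x y} = b) \<and>
     (\<forall>x\<in>V - C. card {y \<in> C. adj x y} = c \<and> card {y \<in> V - C. adj x y} = d)"

end

theory Submission
  imports Defs
begin

definition flip :: "nat set \<Rightarrow> nat set \<Rightarrow> nat set" where
  "flip x S = (x - S) \<union> (S - x)"

lemma flip_flip[simp]: "flip (flip x S) S = x"
  by (auto simp: flip_def)

lemma flip_comp: "flip (flip x A) B = flip x (flip A B)"
  by (auto simp: flip_def)

lemma flip_sub: "x \<subseteq> {..<n} \<Longrightarrow> S \<subseteq> {..<n} \<Longrightarrow> flip x S \<subseteq> {..<n}"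
  by (auto simp: flip_def)

lemma card_flip:
  assumes "finite x" "finite S"
  shows "card (flip x S) + 2 * card (x \<inter> S) = card x + card S"
proof -
  have d: "(x - S) \<inter> (S - x) = {}" by auto
  have "card (flip x S) = card (x - S) + card (S - x)"
    unfolding flip_def using assms d by (simp add: card_Un_disjoint)
  moreover have "card (x - S) + card (x \<inter> S) = card x"
    using assms by (metis Diff_Diff_Int card_Diff_subset_Int Int_lower1 Un_Diff_Int
        card_Un_disjoint finite_Diff finite_Int Diff_disjoint inf_commute inf_sup_aci(1) Int_Diff_disjoint)
  moreover have "card (S - x) + card (x \<inter> S) = card S"
    using assms by (metis card_Un_disjoint Diff_disjoint Int_Diff_disjoint Un_Diff_Int finite_Diff finite_Int inf_commute)
  ultimately show ?thesis by simp
qed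

lemma ham_flip: "finite S \<Longrightarrow> hamming_dist x (flip x S) = card S"
proof -
  have "(x - flip x S) \<union> (flip x S - x) = S" by (auto simp: flip_def)
  then show ?thesis by (simp add: hamming_dist_def)
qed

lemma ham_sym: "hamming_dist x y = hamming_dist y x"
  by (simp add: hamming_dist_def Un_commute)

lemma adj_sym: "halved_cube_adj x y = halved_cube_adj y x"
  by (simp add: halved_cube_adj_def ham_sym)

lemma adj_flip: "i \<noteq> j \<Longrightarrow> halved_cube_adj x (flip x {i,j})"
  by (simp add: halved_cube_adj_def ham_flip)

lemma adj_cases:
  assumes "halved_cube_adj x y"
  obtains i j where "i \<noteq> j" "y = flip x {i,j}" "i \<in> x \<union> y" "j \<in> x \<union> y"
proof -
  let ?D = "(x - y) \<union> (y - x)"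
  have "card ?D = 2" using assms by (simp add: halved_cube_adj_def hamming_dist_def)
  then obtain i j where ij: "i \<noteq> j" "?D = {i,j}" by (auto simp: card_2_iff)
  have "y = flip x ?D" by (auto simp: flip_def)
  with ij have "y = flip x {i,j}" by simp
  moreover have "i \<in> x \<union> y" "j \<in> x \<union> y" using ij(2) by blast+
  ultimately show ?thesis using that ij(1) by blast
qed

abbreviation V24 where "V24 \<equiv> halved_cube_vertices 24"

lemma V_iff: "x \<in> V24 \<longleftrightarrow> x \<subseteq> {..<24} \<and> even (card x)"
  by (simp add: halved_cube_vertices_def words_def weight_def)

lemma V_finite: "x \<in> V24 \<Longrightarrow> finite x"
  by (auto simp: V_iff intro: finite_subset)

lemma V_flip:
  assumes "x \<in> V24" "i \<noteq> j" "i < 24" "j < 24"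
  shows "flip x {i,j} \<in> V24"
proof -
  have f: "finite x" using assms(1) by (rule V_finite)
  have "card (flip x {i,j}) + 2 * card (x \<inter> {i,j}) = card x + 2"
    using card_flip[OF f, of "{i,j}"] assms(2) by simp
  moreover have "even (card x)" using assms(1) V_iff by blast
  ultimately have "even (card (flip x {i,j}))" by presburger
  moreover have "flip x {i,j} \<subseteq> {..<24}"
    using assms V_iff by (intro flip_sub) auto
  ultimately show ?thesis by (simp add: V_iff)
qed

lemma V_adj_cases:
  assumes "x \<in> V24" "y \<in> V24" "halved_cube_adj x y"
  obtains i j where "i \<noteq> j" "y = flip x {i,j}" "i < 24" "j < 24"
proof -
  obtain i j where "i \<noteq> j" "y = flip x {i,j}" "i \<in> x \<union> y" "j \<in> x \<union> y"
    using adj_cases[OF assms(3)] by blast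
  moreover have "x \<union> y \<subseteq> {..<24}" using assms V_iff by auto
  ultimately show ?thesis using that by auto
qed

lemma flip_flip2[simp]: "flip x (flip x A) = A"
  by (auto simp: flip_def)

lemma flip_inj: "flip x A = flip x B \<Longrightarrow> A = B"
  by (metis flip_flip2)

lemma flip_pair_eq:
  assumes "i \<noteq> j" "k \<noteq> l" "flip x {i,j} = flip x {k,l}"
  shows "{i,j} = {k,l}"
  using flip_inj[OF assms(3)] .

lemma flip_ne: "i \<noteq> j \<Longrightarrow> flip x {i,j} \<noteq> x"
  by (auto simp: flip_def)


lemma graph_universal:
  fixes E :: "nat \<Rightarrow> nat \<Rightarrow> bool" and d :: "nat \<Rightarrow> nat" and c :: nat
  assumes sym: "\<And>i j. E i j = E j i"
    and d_def: "\<And>i. i < 24 \<Longrightarrow> d i = card {j. j < 24 \<and> j \<noteq> i \<and> E i j}"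
    and sum: "(\<Sum>i<24. d i) = 2 * (20 + c)"
    and ne: "\<And>i j. i < 24 \<Longrightarrow> j < 24 \<Longrightarrow> i \<noteq> j \<Longrightarrow> \<not> E i j \<Longrightarrow> 1 + d i + d j \<le> c"
    and c5: "c \<le> 5"
  shows "\<exists>v<24. d v = 23"
proof (rule ccontr)
  assume H: "\<not> (\<exists>v<24. d v = 23)"
  have nonnb: "\<exists>u<24. u \<noteq> v \<and> \<not> E v u" if v: "v < 24" for v
  proof (rule ccontr)
    assume "\<not> ?thesis"
    then have "{j. j < 24 \<and> j \<noteq> v \<and> E v j} = {..<24} - {v}" by auto
    then have "d v = 23" using d_def[OF v] v by simp
    then show False using H v by blast
  qed
  have small: "1 + d v \<le> c" if v: "v < 24" for v
    using nonnb[OF v] ne[OF v] by fastforce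
  obtain v where v: "v < 24" and vmax: "\<And>u. u < 24 \<Longrightarrow> d u \<le> d v"
  proof -
    have fin: "finite (d ` {..<24})" by simp
    have ne: "d ` {..<24} \<noteq> {}" by (simp add: lessThan_empty_iff)
    define m where "m = Max (d ` {..<24})"
    have "m \<in> d ` {..<24}" unfolding m_def using fin ne by (rule Max_in)
    then obtain w where w: "w < 24" "d w = m" by auto
    have "d u \<le> m" if "u < 24" for u unfolding m_def using fin that by (intro Max_ge) auto
    then show ?thesis using that w by metis
  qed
  define M where "M = d v"
  define Nb where "Nb = {j. j < 24 \<and> j \<noteq> v \<and> E v j}"
  define Non where "Non = {j. j < 24 \<and> j \<noteq> v \<and> \<not> E v j}"
  have cardNb: "card Nb = M" using d_def[OF v] by (simp add: Nb_def M_def)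
  have part: "{..<24} = insert v (Nb \<union> Non)" using v by (auto simp: Nb_def Non_def)
  have disj: "Nb \<inter> Non = {}" "v \<notin> Nb \<union> Non" by (auto simp: Nb_def Non_def)
  have finNb: "finite Nb" and finNon: "finite Non" by (auto simp: Nb_def Non_def)
  have cNN: "card Nb + card Non = 23"
  proof -
    have "card (insert v (Nb \<union> Non)) = 24" using part by (metis card_lessThan)
    then show ?thesis using disj finNb finNon by (simp add: card_Un_disjoint)
  qed
  have s1: "(\<Sum>i\<in>Nb. d i) \<le> card Nb * M"
    using sum_bounded_above[of Nb d M] vmax by (auto simp: Nb_def M_def)
  have s2: "(\<Sum>i\<in>Non. d i) \<le> card Non * (c - 1 - M)"
  proof -
    have "d i \<le> c - 1 - M" if "i \<in> Non" for i
      using ne[of v i] that v by (auto simp: Non_def M_def sym)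
    then show ?thesis using sum_bounded_above[of Non d "c - 1 - M"] by auto
  qed
  have tot: "(\<Sum>i<24. d i) = M + (\<Sum>i\<in>Nb. d i) + (\<Sum>i\<in>Non. d i)"
    using disj finNb finNon by (simp add: part sum.union_disjoint M_def)
  have tot2: "(\<Sum>i<24. d i) \<le> 24 * M"
    using sum_bounded_above[of "{..<24}" d M] vmax by (auto simp: M_def)
  have Mc: "1 + M \<le> c" using small[OF v] by (simp add: M_def)
  have ineq: "2 * (20 + c) \<le> M + M * M + (23 - M) * (c - 1 - M)"
  proof -
    have "card Non = 23 - M" using cNN cardNb by simp
    then have "(\<Sum>i<24. d i) \<le> M + M * M + (23 - M) * (c - 1 - M)"
      using tot s1 s2 cardNb by (metis add_le_mono le_refl)
    then show ?thesis using sum by simp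
  qed
  have ineq2: "2 * (20 + c) \<le> 24 * M" using sum tot2 by simp
  have M2: "2 \<le> M"
  proof (rule ccontr)
    assume "\<not> 2 \<le> M"
    then have "24 * M \<le> 24" by simp
    then show False using ineq2 by simp
  qed
  have M4: "M \<le> 4" and c3: "3 \<le> c" using Mc c5 M2 by linarith+
  have "M = 2 \<or> M = 3 \<or> M = 4" using M2 M4 by presburger
  moreover have "c = 3 \<or> c = 4 \<or> c = 5" using c3 c5 by presburger
  ultimately show False using ineq Mc by (elim disjE) simp_all
qed


lemma graph_max4:
  fixes E :: "nat \<Rightarrow> nat \<Rightarrow> bool" and d :: "nat \<Rightarrow> nat"
  assumes sym: "\<And>i j. E i j = E j i"
    and d_def: "\<And>i. i < 24 \<Longrightarrow> d i = card {j. j < 24 \<and> j \<noteq> i \<and> E i j}"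
    and sum: "(\<Sum>i<24. d i) = 54"
    and ne: "\<And>i j. i < 24 \<Longrightarrow> j < 24 \<Longrightarrow> i \<noteq> j \<Longrightarrow> \<not> E i j \<Longrightarrow> 1 + d i + d j \<le> 7"
    and H: "\<not> (\<exists>v<24. d v = 23)"
  shows "\<forall>v<24. d v \<le> 4"
proof (rule ccontr)
  assume H4: "\<not> (\<forall>v<24. d v \<le> 4)"
  have nonnb: "\<exists>u<24. u \<noteq> v \<and> \<not> E v u" if v: "v < 24" for v
  proof (rule ccontr)
    assume "\<not> ?thesis"
    then have "{j. j < 24 \<and> j \<noteq> v \<and> E v j} = {..<24} - {v}" by auto
    then have "d v = 23" using d_def[OF v] v by simp
    then show False using H v by blast
  qed
  have small: "1 + d v \<le> 7" if v: "v < 24" for v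
    using nonnb[OF v] ne[OF v] by fastforce
  obtain v where v: "v < 24" and vmax: "\<And>u. u < 24 \<Longrightarrow> d u \<le> d v"
  proof -
    have fin: "finite (d ` {..<24})" by simp
    have ne: "d ` {..<24} \<noteq> {}" by (simp add: lessThan_empty_iff)
    define m where "m = Max (d ` {..<24})"
    have "m \<in> d ` {..<24}" unfolding m_def using fin ne by (rule Max_in)
    then obtain w where w: "w < 24" "d w = m" by auto
    have "d u \<le> m" if "u < 24" for u unfolding m_def using fin that by (intro Max_ge) auto
    then show ?thesis using that w by metis
  qed
  define M where "M = d v"
  have M5: "5 \<le> M" using H4 vmax by (force simp: M_def)
  define Nb where "Nb = {j. j < 24 \<and> j \<noteq> v \<and> E v j}"
  define Non where "Non = {j. j < 24 \<and> j \<noteq> v \<and> \<not> E v j}"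
  have cardNb: "card Nb = M" using d_def[OF v] by (simp add: Nb_def M_def)
  have part: "{..<24} = insert v (Nb \<union> Non)" using v by (auto simp: Nb_def Non_def)
  have disj: "Nb \<inter> Non = {}" "v \<notin> Nb \<union> Non" by (auto simp: Nb_def Non_def)
  have finNb: "finite Nb" and finNon: "finite Non" by (auto simp: Nb_def Non_def)
  have cNN: "card Nb + card Non = 23"
  proof -
    have "card (insert v (Nb \<union> Non)) = 24" using part by (metis card_lessThan)
    then show ?thesis using disj finNb finNon by (simp add: card_Un_disjoint)
  qed
  have s1: "(\<Sum>i\<in>Nb. d i) \<le> card Nb * M"
    using sum_bounded_above[of Nb d M] vmax by (auto simp: Nb_def M_def)
  have s2: "(\<Sum>i\<in>Non. d i) \<le> card Non * (6 - M)"
  proof -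
    have "d i \<le> 6 - M" if "i \<in> Non" for i
      using ne[of v i] that v by (auto simp: Non_def M_def sym)
    then show ?thesis using sum_bounded_above[of Non d "6 - M"] by auto
  qed
  have tot: "(\<Sum>i<24. d i) = M + (\<Sum>i\<in>Nb. d i) + (\<Sum>i\<in>Non. d i)"
    using disj finNb finNon by (simp add: part sum.union_disjoint M_def)
  have Mc: "1 + M \<le> 7" using small[OF v] by (simp add: M_def)
  have ineq: "54 \<le> M + M * M + (23 - M) * (6 - M)"
  proof -
    have "card Non = 23 - M" using cNN cardNb by simp
    then have "(\<Sum>i<24. d i) \<le> M + M * M + (23 - M) * (6 - M)"
      using tot s1 s2 cardNb by (metis add_le_mono le_refl)
    then show ?thesis using sum by simp
  qed
  have "M = 5 \<or> M = 6" using M5 Mc by presburger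
  then show False using ineq by (elim disjE) simp_all
qed


fun pairsum :: "'a set list \<Rightarrow> nat" where
  "pairsum [] = 0"
| "pairsum (B # Bs) = (\<Sum>X\<leftarrow>Bs. card (B \<inter> X)) + pairsum Bs"

lemma card_inter_union_le:
  assumes "\<forall>X\<in>set Bs. finite X"
  shows "card (B \<inter> \<Union>(set Bs)) \<le> (\<Sum>X\<leftarrow>Bs. card (B \<inter> X))"
  using assms
proof (induction Bs)
  case Nil then show ?case by simp
next
  case (Cons X Bs)
  have "B \<inter> \<Union>(set (X # Bs)) = (B \<inter> X) \<union> (B \<inter> \<Union>(set Bs))" by auto
  then have "card (B \<inter> \<Union>(set (X # Bs))) \<le> card (B \<inter> X) + card (B \<inter> \<Union>(set Bs))"
    by (metis card_Un_le)
  then show ?case using Cons by simp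
qed

lemma bonf:
  assumes "\<forall>X\<in>set Bs. finite X"
  shows "(\<Sum>X\<leftarrow>Bs. card X) \<le> card (\<Union>(set Bs)) + pairsum Bs"
  using assms
proof (induction Bs)
  case Nil then show ?case by simp
next
  case (Cons B Bs)
  have fin: "finite B" "finite (\<Union>(set Bs))" using Cons.prems by auto
  have "card B + card (\<Union>(set Bs)) = card (B \<union> \<Union>(set Bs)) + card (B \<inter> \<Union>(set Bs))"
    using card_Un_Int[OF fin] .
  moreover have "card (B \<inter> \<Union>(set Bs)) \<le> (\<Sum>X\<leftarrow>Bs. card (B \<inter> X))"
    using card_inter_union_le Cons.prems by auto
  moreover have "(\<Sum>X\<leftarrow>Bs. card X) \<le> card (\<Union>(set Bs)) + pairsum Bs"
    using Cons by auto
  ultimately show ?case by simp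
qed


locale pc =
  fixes C :: "nat set set" and c :: nat
  assumes PC: "perfect_coloring V24 halved_cube_adj C (20 + c) (256 - c) c (276 - c)"
begin

lemma C_sub: "C \<subseteq> V24" using PC by (auto simp: perfect_coloring_def)
lemma C_ne: "C \<noteq> {}" using PC by (auto simp: perfect_coloring_def)
lemma inC: "x \<in> C \<Longrightarrow> card {y \<in> C. halved_cube_adj x y} = 20 + c"
  using PC by (auto simp: perfect_coloring_def)
lemma inC2: "x \<in> C \<Longrightarrow> card {y \<in> V24 - C. halved_cube_adj x y} = 256 - c"
  using PC by (auto simp: perfect_coloring_def)
lemma outC: "x \<in> V24 - C \<Longrightarrow> card {y \<in> C. halved_cube_adj x y} = c"
  using PC by (auto simp: perfect_coloring_def)

lemma finV: "finite V24"
proof -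
  have "V24 \<subseteq> Pow {..<24}" by (auto simp: V_iff)
  then show ?thesis by (rule finite_subset) auto
qed

lemma finC: "finite C" using finite_subset[OF C_sub finV] .

definition deg :: "nat set \<Rightarrow> nat \<Rightarrow> nat" where
  "deg x i = card {j. j < 24 \<and> j \<noteq> i \<and> flip x {i,j} \<in> C}"

lemma nonedge:
  assumes x: "x \<in> C" and ij: "i < 24" "j < 24" "i \<noteq> j" and ne: "flip x {i,j} \<notin> C"
  shows "1 + deg x i + deg x j \<le> c"
proof -
  let ?y = "flip x {i,j}"
  have xV: "x \<in> V24" using x C_sub by auto
  have yV: "?y \<in> V24 - C" using V_flip[OF xV ij(3) ij(1) ij(2)] ne by auto
  let ?Di = "{k. k < 24 \<and> k \<noteq> i \<and> flip x {i,k} \<in> C}"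
  let ?Dj = "{k. k < 24 \<and> k \<noteq> j \<and> flip x {j,k} \<in> C}"
  let ?S = "{x} \<union> (\<lambda>k. flip x {i,k}) ` ?Di \<union> (\<lambda>k. flip x {j,k}) ` ?Dj"
  have fin: "finite ?Di" "finite ?Dj" by auto
  have inji: "inj_on (\<lambda>k. flip x {i,k}) ?Di"
    by (rule inj_onI) (drule flip_inj, auto simp: doubleton_eq_iff)
  have injj: "inj_on (\<lambda>k. flip x {j,k}) ?Dj"
    by (rule inj_onI) (drule flip_inj, auto simp: doubleton_eq_iff)
  have d1: "x \<notin> (\<lambda>k. flip x {i,k}) ` ?Di \<union> (\<lambda>k. flip x {j,k}) ` ?Dj"
  proof -
    have "\<And>k. k \<noteq> i \<Longrightarrow> flip x {i,k} \<noteq> x" "\<And>k. k \<noteq> j \<Longrightarrow> flip x {j,k} \<noteq> x"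
      using flip_ne by metis+
    then show ?thesis by blast
  qed
  have d2: "(\<lambda>k. flip x {i,k}) ` ?Di \<inter> (\<lambda>k. flip x {j,k}) ` ?Dj = {}"
  proof -
    have "flip x {i,k} \<noteq> flip x {j,l}" if "k \<in> ?Di" "l \<in> ?Dj" for k l
    proof
      assume "flip x {i,k} = flip x {j,l}"
      then have "{i,k} = {j,l}" by (rule flip_inj)
      then have "k = j" using ij(3) by (auto simp: doubleton_eq_iff)
      then show False using that ne by simp
    qed
    then show ?thesis by blast
  qed
  have cardS: "card ?S = 1 + deg x i + deg x j"
  proof -
    have "card ?S = card {x} + card ((\<lambda>k. flip x {i,k}) ` ?Di \<union> (\<lambda>k. flip x {j,k}) ` ?Dj)"
      using d1 fin by (subst card_Un_disjoint[symmetric]) (auto simp: Un_assoc)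
    also have "card ((\<lambda>k. flip x {i,k}) ` ?Di \<union> (\<lambda>k. flip x {j,k}) ` ?Dj)
        = card ((\<lambda>k. flip x {i,k}) ` ?Di) + card ((\<lambda>k. flip x {j,k}) ` ?Dj)"
      using d2 fin by (intro card_Un_disjoint) auto
    also have "\<dots> = deg x i + deg x j"
      using card_image[OF inji] card_image[OF injj] by (simp add: deg_def)
    finally show ?thesis by simp
  qed
  have sub: "?S \<subseteq> {w \<in> C. halved_cube_adj ?y w}"
  proof
    fix w assume w: "w \<in> ?S"
    show "w \<in> {w \<in> C. halved_cube_adj ?y w}"
    proof (cases "w = x")
      case True
      then show ?thesis using x adj_flip[OF ij(3), of x] adj_sym by auto
    next
      case False
      then consider (a) k where "k \<in> ?Di" "w = flip x {i,k}"
        | (b) k where "k \<in> ?Dj" "w = flip x {j,k}" using w by blast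
      then show ?thesis
      proof cases
        case a
        then have kj: "k \<noteq> j" using ne by auto
        have "w = flip ?y {j,k}"
          using a kj ij(3) by (auto simp: flip_def)
        then show ?thesis using a kj adj_flip[of j k ?y] by auto
      next
        case b
        then have ki: "k \<noteq> i" using ne by (auto simp: insert_commute)
        have "w = flip ?y {i,k}"
          using b ki ij(3) by (auto simp: flip_def)
        then show ?thesis using b ki adj_flip[of i k ?y] by auto
      qed
    qed
  qed
  have "finite {w \<in> C. halved_cube_adj ?y w}" using finC by simp
  then have "card ?S \<le> card {w \<in> C. halved_cube_adj ?y w}" using sub card_mono by blast
  then show ?thesis using cardS outC[OF yV] by simp
qed

lemma deg_le: assumes "i < 24" shows "deg x i \<le> 23"
proof -
  have "{j. j < 24 \<and> j \<noteq> i \<and> flip x {i,j} \<in> C} \<subseteq> {..<24} - {i}" by auto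
  then have "deg x i \<le> card ({..<24::nat} - {i})" unfolding deg_def by (intro card_mono) auto
  also have "\<dots> \<le> 23" using assms by simp
  finally show ?thesis .
qed

lemma deg_sum:
  assumes x: "x \<in> C"
  shows "(\<Sum>i<24. deg x i) = 2 * (20 + c)"
proof -
  let ?T = "{y \<in> C. halved_cube_adj x y}"
  let ?R = "\<lambda>i y. \<exists>j. j < 24 \<and> j \<noteq> i \<and> y = flip x {i,j}"
  have xV: "x \<in> V24" using x C_sub by auto
  have finT: "finite ?T" using finC by simp
  have A: "card {y \<in> ?T. ?R i y} = deg x i" if i: "i < 24" for i
  proof -
    have "{y \<in> ?T. ?R i y} = (\<lambda>j. flip x {i,j}) ` {j. j < 24 \<and> j \<noteq> i \<and> flip x {i,j} \<in> C}"
      by (auto simp: adj_flip)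
    moreover have "inj_on (\<lambda>j. flip x {i,j}) {j. j < 24 \<and> j \<noteq> i \<and> flip x {i,j} \<in> C}"
      by (rule inj_onI) (drule flip_inj, auto simp: doubleton_eq_iff)
    ultimately show ?thesis by (simp add: card_image deg_def)
  qed
  have B: "\<forall>y\<in>?T. card {i \<in> {..<24}. ?R i y} = 2"
  proof
    fix y assume y: "y \<in> ?T"
    then have yV: "y \<in> V24" using C_sub by auto
    obtain a b where ab: "a \<noteq> b" "y = flip x {a,b}" "a < 24" "b < 24"
      using V_adj_cases[OF xV yV] y by blast
    have "{i \<in> {..<24}. ?R i y} = {a,b}"
    proof (intro equalityI subsetI)
      fix i assume "i \<in> {i \<in> {..<24}. ?R i y}"
      then obtain j where "j \<noteq> i" "y = flip x {i,j}" by blast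
      then have "{i,j} = {a,b}" using ab(2) flip_inj by metis
      then show "i \<in> {a,b}" by blast
    next
      fix i assume "i \<in> {a,b}"
      then consider "i = a" | "i = b" by blast
      then show "i \<in> {i \<in> {..<24}. ?R i y}"
      proof cases
        case 1
        have "?R a y" using ab by (intro exI[of _ b]) simp
        then show ?thesis using 1 ab by simp
      next
        case 2
        have "?R b y" using ab by (intro exI[of _ a]) (simp add: insert_commute)
        then show ?thesis using 2 ab by simp
      qed
    qed
    then show "card {i \<in> {..<24}. ?R i y} = 2" using ab(1) by simp
  qed
  have "(\<Sum>i<24. card {y \<in> ?T. ?R i y}) = 2 * card ?T"
    using sum_multicount[OF _ finT B] by simp
  moreover have "(\<Sum>i<24. card {y \<in> ?T. ?R i y}) = (\<Sum>i<24. deg x i)"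
    using A by (intro sum.cong) auto
  ultimately show ?thesis using inC[OF x] by simp
qed

end

context pc begin

lemma universal_ex:
  assumes x: "x \<in> C" and c5: "c \<le> 5"
  shows "\<exists>v<24. deg x v = 23"
proof (rule graph_universal[where E = "\<lambda>i j. flip x {i,j} \<in> C" and c = c])
  show "\<And>i j. (flip x {i,j} \<in> C) = (flip x {j,i} \<in> C)" by (simp add: insert_commute)
  show "\<And>i. i < 24 \<Longrightarrow> deg x i = card {j. j < 24 \<and> j \<noteq> i \<and> flip x {i,j} \<in> C}"
    by (simp add: deg_def)
  show "(\<Sum>i<24. deg x i) = 2 * (20 + c)" using deg_sum[OF x] .
  show "\<And>i j. i < 24 \<Longrightarrow> j < 24 \<Longrightarrow> i \<noteq> j \<Longrightarrow> flip x {i,j} \<notin> C \<Longrightarrow> 1 + deg x i + deg x j \<le> c"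
    using nonedge[OF x] by blast
  show "c \<le> 5" by fact
qed

lemma deg23:
  assumes "v < 24" "deg x v = 23" "j < 24" "j \<noteq> v"
  shows "flip x {v,j} \<in> C"
proof -
  let ?S = "{j. j < 24 \<and> j \<noteq> v \<and> flip x {v,j} \<in> C}"
  have sub: "?S \<subseteq> {..<24} - {v}" by auto
  have "card ?S = card ({..<24::nat} - {v})" using assms(1,2) by (simp add: deg_def)
  then have "?S = {..<24} - {v}" using sub by (intro card_subset_eq) auto
  then show ?thesis using assms(3,4) by blast
qed

lemma deg_ge_edge:
  assumes "i < 24" "k < 24" "k \<noteq> i" "flip x {i,k} \<in> C"
  shows "k \<in> {j. j < 24 \<and> j \<noteq> i \<and> flip x {i,j} \<in> C}"
  using assms by simp

lemma deg_ge1: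
  assumes "v < 24" "deg x v = 23" "j < 24" "j \<noteq> v"
  shows "1 \<le> deg x j"
proof -
  have "flip x {j,v} \<in> C" using deg23[OF assms] by (simp add: insert_commute)
  then have "v \<in> {k. k < 24 \<and> k \<noteq> j \<and> flip x {j,k} \<in> C}" using assms by simp
  then have "{k. k < 24 \<and> k \<noteq> j \<and> flip x {j,k} \<in> C} \<noteq> {}" by blast
  then show ?thesis unfolding deg_def by (simp add: Suc_le_eq card_gt_0_iff)
qed

lemma deg_ge2:
  assumes "u < 24" "deg x u = 23" "v < 24" "deg x v = 23" "u \<noteq> v" "j < 24" "j \<noteq> v" "j \<noteq> u"
  shows "2 \<le> deg x j"
proof -
  have "flip x {j,v} \<in> C" using deg23[of v x j] assms by (simp add: insert_commute)
  moreover have "flip x {j,u} \<in> C" using deg23[of u x j] assms by (simp add: insert_commute)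
  ultimately have "{u,v} \<subseteq> {k. k < 24 \<and> k \<noteq> j \<and> flip x {j,k} \<in> C}" using assms by auto
  then have "card {u,v} \<le> deg x j" unfolding deg_def by (intro card_mono) auto
  then show ?thesis using assms(5) by simp
qed

lemma no_small_c:
  assumes x: "x \<in> C" and c2: "c \<le> 2"
  shows False
proof -
  obtain v where v: "v < 24" "deg x v = 23" using universal_ex[OF x] c2 by auto
  have "(\<Sum>i<24::nat. 1 + (if i = v then 22 else 0)) \<le> (\<Sum>i<24. deg x i)"
  proof (rule sum_mono)
    fix i assume "i \<in> {..<24::nat}"
    then show "1 + (if i = v then 22 else 0) \<le> deg x i"
      using v deg_ge1[of v x i] by auto
  qed
  moreover have "(\<Sum>i<24::nat. 1 + (if i = v then 22 else 0)) = (46::nat)"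
  proof -
    have "(\<Sum>i<24::nat. (if i = v then 22 else 0::nat)) = 22" using v by (simp add: sum.delta)
    then show ?thesis by (simp only: sum.distrib) simp
  qed
  ultimately show False using deg_sum[OF x] c2 by simp
qed

lemma center_unique:
  assumes x: "x \<in> C" and c7: "c \<le> 7"
    and u: "u < 24" "deg x u = 23" and v: "v < 24" "deg x v = 23"
  shows "u = v"
proof (rule ccontr)
  assume uv: "u \<noteq> v"
  have "(\<Sum>i<24::nat. 2 + (if i = u then 21 else 0) + (if i = v then 21 else 0)) \<le> (\<Sum>i<24. deg x i)"
  proof (rule sum_mono)
    fix i assume i: "i \<in> {..<24::nat}"
    show "2 + (if i = u then 21 else 0) + (if i = v then 21 else 0) \<le> deg x i"
      using u v uv i deg_ge2[of u x v i] by auto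
  qed
  moreover have "(\<Sum>i<24::nat. 2 + (if i = u then 21 else 0) + (if i = v then 21 else 0)) = (90::nat)"
  proof -
    have "(\<Sum>i<24::nat. (if i = v then 21 else 0::nat)) = 21" using v by (simp add: sum.delta)
    moreover have "(\<Sum>i<24::nat. (if i = u then 21 else 0::nat)) = 21" using u by (simp add: sum.delta)
    ultimately show ?thesis by (simp only: sum.distrib) simp
  qed
  ultimately show False using deg_sum[OF x] c7 by simp
qed

end

lemma card_V: "card V24 = 2 ^ 23"
proof -
  let ?E = "V24"
  let ?O = "{x::nat set. x \<subseteq> {..<24} \<and> odd (card x)}"
  have EO: "Pow {..<24::nat} = ?E \<union> ?O" by (auto simp: V_iff)
  have disj: "?E \<inter> ?O = {}" by (auto simp: V_iff)
  have finE: "finite ?E" and finO: "finite ?O"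
    using finite_subset[of ?E "Pow {..<24::nat}"] finite_subset[of ?O "Pow {..<24::nat}"] EO
    by (metis Un_upper1 finite_Pow_iff finite_lessThan, metis Un_upper2 finite_Pow_iff finite_lessThan)
  have par: "card (flip x {0}) + 2 * card (x \<inter> {0}) = card x + 1" if "x \<subseteq> {..<24}" for x :: "nat set"
    using card_flip[of x "{0}"] that finite_subset by auto
  have sub0: "flip x {0} \<subseteq> {..<24}" if "x \<subseteq> {..<24}" for x :: "nat set"
    using that flip_sub[of x 24 "{0}"] by auto
  have "bij_betw (\<lambda>x. flip x {0}) ?E ?O"
  proof (rule bij_betw_byWitness[where f' = "\<lambda>x. flip x {0}"])
    show "\<forall>a\<in>?E. flip (flip a {0}) {0} = a" by simp
    show "\<forall>a\<in>?O. flip (flip a {0}) {0} = a" by simp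
    show "(\<lambda>x. flip x {0}) ` ?E \<subseteq> ?O"
    proof
      fix y assume "y \<in> (\<lambda>x. flip x {0}) ` ?E"
      then obtain x where x: "x \<in> ?E" "y = flip x {0}" by blast
      have "x \<subseteq> {..<24}" "even (card x)" using x(1) V_iff by auto
      then have p: "card (flip x {0}) + 2 * card (x \<inter> {0}) = card x + 1" "flip x {0} \<subseteq> {..<24}"
        using par[of x] sub0[of x] by auto
      have "odd (card (flip x {0}))" using p(1) \<open>even (card x)\<close> by presburger
      then show "y \<in> ?O" using p(2) x(2) by simp
    qed
    show "(\<lambda>x. flip x {0}) ` ?O \<subseteq> ?E"
    proof
      fix y assume "y \<in> (\<lambda>x. flip x {0}) ` ?O"
      then obtain x where x: "x \<in> ?O" "y = flip x {0}" by blast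
      have "x \<subseteq> {..<24}" "odd (card x)" using x(1) by auto
      then have p: "card (flip x {0}) + 2 * card (x \<inter> {0}) = card x + 1" "flip x {0} \<subseteq> {..<24}"
        using par[of x] sub0[of x] by auto
      have "even (card (flip x {0}))" using p(1) \<open>odd (card x)\<close> by presburger
      then show "y \<in> ?E" using p(2) x(2) V_iff by simp
    qed
  qed
  then have "card ?E = card ?O" by (rule bij_betw_same_card)
  moreover have "card (Pow {..<24::nat}) = card ?E + card ?O"
    using EO disj finE finO by (simp add: card_Un_disjoint)
  moreover have "card (Pow {..<24::nat}) = 2 ^ 24" by (simp add: card_Pow)
  ultimately show ?thesis by simp
qed


context pc begin

lemma card_C:
  assumes c256: "c \<le> 256"
  shows "card C * 256 = c * 2 ^ 23"
proof -
  have finVC: "finite (V24 - C)" using finV by simp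
  have "(\<Sum>x\<in>C. card {y \<in> V24 - C. halved_cube_adj x y}) = (\<Sum>y\<in>V24 - C. card {x \<in> C. halved_cube_adj x y})"
    by (rule sum_multicount_gen[OF finC finVC]) simp
  moreover have "(\<Sum>x\<in>C. card {y \<in> V24 - C. halved_cube_adj x y}) = card C * (256 - c)"
    using inC2 by simp
  moreover have "(\<Sum>y\<in>V24 - C. card {x \<in> C. halved_cube_adj x y}) = card (V24 - C) * c"
  proof -
    have "card {x \<in> C. halved_cube_adj x y} = c" if "y \<in> V24 - C" for y
      using outC[OF that] by (simp add: adj_sym)
    then show ?thesis by simp
  qed
  moreover have "card (V24 - C) = 2 ^ 23 - card C" using C_sub finC card_V by (simp add: card_Diff_subset)
  moreover have "card C \<le> 2 ^ 23" using card_mono[OF finV C_sub] card_V by simp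
  ultimately have eq: "card C * (256 - c) = (2 ^ 23 - card C) * c" by simp
  have "int (card C) * (256 - int c) = (2 ^ 23 - int (card C)) * int c"
  proof -
    have "int (card C * (256 - c)) = int ((2 ^ 23 - card C) * c)" using eq by simp
    then show ?thesis using c256 \<open>card C \<le> 2 ^ 23\<close> by (simp add: of_nat_diff)
  qed
  then have "int (card C) * 256 = int c * 2 ^ 23" by (simp add: algebra_simps)
  then show ?thesis by (metis of_nat_eq_iff of_nat_mult of_nat_numeral of_nat_power)
qed

definition cen :: "nat set \<Rightarrow> nat" where
  "cen x = (THE v. v < 24 \<and> deg x v = 23)"

definition zz :: "nat set \<Rightarrow> nat set" where
  "zz x = flip x {cen x}"

lemma cen_eq:
  assumes x: "x \<in> C" and c7: "c \<le> 7" and v: "v < 24" "deg x v = 23"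
  shows "cen x = v"
  unfolding cen_def
  using center_unique[OF x c7] v by (intro the_equality) auto

lemma fiber:
  assumes c7: "c \<le> 7" and univ: "\<forall>x\<in>C. \<exists>v<24. deg x v = 23" and x: "x \<in> C"
  shows "{x' \<in> C. zz x' = zz x} = (\<lambda>k. flip (zz x) {k}) ` {..<24}"
proof -
  obtain v where v: "v < 24" "deg x v = 23" using univ x by blast
  have cx: "cen x = v" using cen_eq[OF x c7 v] .
  have zx: "zz x = flip x {v}" by (simp add: zz_def cx)
  show ?thesis
  proof (intro equalityI subsetI)
    fix x' assume x': "x' \<in> {x' \<in> C. zz x' = zz x}"
    then obtain v' where v': "v' < 24" "deg x' v' = 23" using univ by blast
    have "cen x' = v'" using cen_eq[of x' v'] x' v' c7 by blast
    then have "x' = flip (zz x') {v'}" by (simp add: zz_def)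
    then show "x' \<in> (\<lambda>k. flip (zz x) {k}) ` {..<24}" using x' v' by auto
  next
    fix y assume "y \<in> (\<lambda>k. flip (zz x) {k}) ` {..<24}"
    then obtain k where k: "k < 24" "y = flip (zz x) {k}" by blast
    have yC: "y \<in> C"
    proof (cases "k = v")
      case True then show ?thesis using k x zx by simp
    next
      case False
      have "y = flip x {v,k}" using k zx False by (auto simp: flip_def)
      then show ?thesis using deg23[OF v k(1)] False by simp
    qed
    have dk: "deg y k = 23"
    proof -
      have "{j. j < 24 \<and> j \<noteq> k \<and> flip y {k,j} \<in> C} = {..<24} - {k}"
      proof (intro equalityI subsetI)
        fix j assume "j \<in> {..<24} - {k}"
        then have j: "j < 24" "j \<noteq> k" by auto
        have "flip y {k,j} \<in> C"
        proof (cases "j = v")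
          case True
          have "flip y {k,j} = x" using k zx True j by (auto simp: flip_def)
          then show ?thesis using x by simp
        next
          case False
          have "flip y {k,j} = flip x {v,j}" using k zx False j by (auto simp: flip_def)
          then show ?thesis using deg23[OF v j(1)] False by simp
        qed
        then show "j \<in> {j. j < 24 \<and> j \<noteq> k \<and> flip y {k,j} \<in> C}" using j by simp
      qed auto
      then show ?thesis using k by (simp add: deg_def)
    qed
    have "cen y = k" using cen_eq[OF yC c7 k(1) dk] .
    then have "zz y = zz x" using k by (simp add: zz_def)
    then show "y \<in> {x' \<in> C. zz x' = zz x}" using yC by simp
  qed
qed

lemma dvd24:
  assumes c7: "c \<le> 7" and univ: "\<forall>x\<in>C. \<exists>v<24. deg x v = 23"
  shows "24 dvd card C"
proof -
  have inj: "inj_on (\<lambda>k. flip z {k}) {..<24}" for z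
    by (rule inj_onI) (drule flip_inj, simp)
  have fc: "card {x' \<in> C. zz x' = z} = 24" if z: "z \<in> zz ` C" for z
  proof -
    obtain x where x: "x \<in> C" "z = zz x" using z by blast
    show ?thesis using fiber[OF c7 univ x(1)] x(2) card_image[OF inj] by simp
  qed
  have "(\<Sum>z\<in>zz ` C. card {x \<in> C. zz x = z}) = 1 * card C"
  proof (rule sum_multicount)
    show "finite (zz ` C)" "finite C" using finC by auto
    show "\<forall>j\<in>C. card {i \<in> zz ` C. zz j = i} = 1"
    proof
      fix j assume "j \<in> C"
      then have "{i \<in> zz ` C. zz j = i} = {zz j}" by auto
      then show "card {i \<in> zz ` C. zz j = i} = 1" by simp
    qed
  qed
  moreover have "(\<Sum>z\<in>zz ` C. card {x \<in> C. zz x = z}) = 24 * card (zz ` C)"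
    using fc by simp
  ultimately show ?thesis by (metis dvd_triv_left mult_1)
qed

end

context pc begin

lemma main_contra:
  assumes c: "c \<in> {1, 2, 4, 5, 7}"
    and univ7: "c = 7 \<Longrightarrow> \<forall>x\<in>C. \<exists>v<24. deg x v = 23"
  shows False
proof -
  obtain x where x: "x \<in> C" using C_ne by blast
  show False
  proof (cases "c \<le> 2")
    case True
    then show False using no_small_c[OF x] by blast
  next
    case False
    then have c457: "c = 4 \<or> c = 5 \<or> c = 7" using c by auto
    have univ: "\<forall>x\<in>C. \<exists>v<24. deg x v = 23"
    proof (cases "c = 7")
      case True then show ?thesis using univ7 by blast
    next
      case False then have "c \<le> 5" using c457 by auto
      then show ?thesis using universal_ex by blast
    qed
    have "24 dvd card C" using dvd24[OF _ univ] c457 by auto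
    then obtain k where k: "card C = 24 * k" by blast
    have "card C * 256 = c * 2 ^ 23" using card_C c457 by auto
    then have "3 * k * 2 ^ 11 = c * 2 ^ 12 * 2 ^ 11" using k by simp
    then have "3 * k = c * 2 ^ 12" by simp
    then have "c * 4096 = 3 * k" by simp
    then have "3 dvd c * 4096" by (metis dvd_triv_left)
    then show False using c457 by auto
  qed
qed

end

lemma ham_card: "hamming_dist x y = card (flip x y)"
  by (simp add: hamming_dist_def flip_def)

lemma flip_assoc: "flip (flip z A) u = flip A (flip z u)"
  by (auto simp: flip_def)

lemma flip_cancel: "flip (flip z A) (flip z B) = flip A B"
  by (auto simp: flip_def)

lemma flip_sym: "flip A B = flip B A"
  by (auto simp: flip_def)

lemma flip_singles: "a \<noteq> k \<Longrightarrow> flip {a} {k} = {a,k}"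
  by (auto simp: flip_def)

lemma flip_empty[simp]: "flip x {} = x"
  by (auto simp: flip_def)

lemma V_flip_gen:
  assumes "x \<in> V24" "T \<subseteq> {..<24}" "even (card T)"
  shows "flip x T \<in> V24"
proof -
  have f: "finite x" using assms(1) by (rule V_finite)
  have fT: "finite T" using assms(2) finite_subset by blast
  have "card (flip x T) + 2 * card (x \<inter> T) = card x + card T"
    using card_flip[OF f fT] .
  moreover have "even (card x)" using assms(1) V_iff by blast
  ultimately have "even (card (flip x T))" using assms(3) by presburger
  moreover have "flip x T \<subseteq> {..<24}"
    using assms V_iff by (intro flip_sub) auto
  ultimately show ?thesis by (simp add: V_iff)
qed

lemma card_flip_single:
  assumes "finite D"
  shows "card (flip {a} D) + 2 * (if a \<in> D then 1 else 0) = 1 + card D"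
proof -
  have "card (flip {a} D) + 2 * card ({a} \<inter> D) = card {a} + card D"
    using card_flip[of "{a}" D] assms by simp
  moreover have "card ({a} \<inter> D) = (if a \<in> D then 1 else 0)" by auto
  ultimately show ?thesis by simp
qed

lemma oddz_flip_V:
  assumes "z \<subseteq> {..<24}" "odd (card z)" "k < 24"
  shows "flip z {k} \<in> V24"
proof -
  have f: "finite z" using assms(1) finite_subset by blast
  have "card (flip z {k}) + 2 * card (z \<inter> {k}) = card z + 1" using card_flip[OF f, of "{k}"] by simp
  then have "even (card (flip z {k}))" using assms(2) by presburger
  moreover have "flip z {k} \<subseteq> {..<24}" using assms by (intro flip_sub) auto
  ultimately show ?thesis by (simp add: V_iff)
qed

context pc begin

definition Mem :: "nat set \<Rightarrow> nat set" where
  "Mem z = {k. k < 24 \<and> flip z {k} \<in> C}"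

definition Nz :: "nat set \<Rightarrow> nat" where
  "Nz z = card (Mem z)"

definition S3 :: "nat set \<Rightarrow> nat set set" where
  "S3 z = {u \<in> C. hamming_dist z u = 3}"

definition Bs :: "nat set \<Rightarrow> nat \<Rightarrow> nat set set" where
  "Bs z a = {u \<in> C. halved_cube_adj (flip z {a}) u \<and> hamming_dist z u = 3}"

lemma C_subV: "u \<in> C \<Longrightarrow> u \<subseteq> {..<24}" using C_sub V_iff by blast

lemma Z_N:
  assumes zs: "z \<subseteq> {..<24}" and zo: "odd (card z)"
  shows "Nz z \<le> c \<or> Nz z = 24"
proof (cases "\<forall>k<24. flip z {k} \<in> C")
  case True
  then have "Mem z = {..<24}" by (auto simp: Mem_def)
  then show ?thesis by (simp add: Nz_def)
next
  case False
  then obtain a where a: "a < 24" "flip z {a} \<notin> C" by blast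
  have wV: "flip z {a} \<in> V24 - C" using oddz_flip_V[OF zs zo a(1)] a(2) by simp
  have sub: "(\<lambda>k. flip z {k}) ` Mem z \<subseteq> {u \<in> C. halved_cube_adj (flip z {a}) u}"
  proof
    fix u assume "u \<in> (\<lambda>k. flip z {k}) ` Mem z"
    then obtain k where k: "k < 24" "flip z {k} \<in> C" "u = flip z {k}" by (auto simp: Mem_def)
    have "k \<noteq> a" using k a by auto
    then have "hamming_dist (flip z {a}) u = 2"
      using k(3) by (simp add: ham_card flip_cancel flip_singles)
    then show "u \<in> {u \<in> C. halved_cube_adj (flip z {a}) u}"
      using k by (simp add: halved_cube_adj_def)
  qed
  have inj: "inj_on (\<lambda>k. flip z {k}) (Mem z)"
    by (rule inj_onI) (drule flip_inj, simp)
  have "Nz z = card ((\<lambda>k. flip z {k}) ` Mem z)" by (simp add: Nz_def card_image[OF inj])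
  also have "\<dots> \<le> card {u \<in> C. halved_cube_adj (flip z {a}) u}"
    using sub finC by (intro card_mono) auto
  also have "\<dots> = c" using outC[OF wV] .
  finally show ?thesis by simp
qed

lemma card_Mem_ham1:
  assumes zs: "z \<subseteq> {..<24}"
  shows "card {u \<in> C. hamming_dist z u = 1} = Nz z"
proof -
  have eq: "{u \<in> C. hamming_dist z u = 1} = (\<lambda>k. flip z {k}) ` Mem z"
  proof (intro equalityI subsetI)
    fix u assume u: "u \<in> {u \<in> C. hamming_dist z u = 1}"
    then obtain k where k: "flip z u = {k}" by (auto simp: ham_card card_1_singleton_iff)
    have "u = flip z {k}" using k by (metis flip_flip2)
    moreover have "k < 24"
    proof -
      have "flip z u \<subseteq> {..<24}" using flip_sub[OF zs C_subV[of u]] u by simp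
      then show ?thesis using k by simp
    qed
    ultimately show "u \<in> (\<lambda>k. flip z {k}) ` Mem z" using u by (auto simp: Mem_def)
  next
    fix u assume "u \<in> (\<lambda>k. flip z {k}) ` Mem z"
    then obtain k where "k \<in> Mem z" "u = flip z {k}" by blast
    then show "u \<in> {u \<in> C. hamming_dist z u = 1}" by (auto simp: Mem_def ham_card)
  qed
  have inj: "inj_on (\<lambda>k. flip z {k}) (Mem z)"
    by (rule inj_onI) (drule flip_inj, simp)
  show ?thesis unfolding Nz_def eq using card_image[OF inj] by blast
qed

lemma adj_flip_single_iff:
  "halved_cube_adj (flip z {k}) u \<longleftrightarrow> card (flip {k} (flip z u)) = 2"
  by (simp add: halved_cube_adj_def ham_card flip_assoc)

lemma count_k:
  assumes zs: "z \<subseteq> {..<24}" and u: "u \<in> C"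
  shows "card {k \<in> {..<24}. halved_cube_adj (flip z {k}) u} =
    (if hamming_dist z u = 1 then 23 else if hamming_dist z u = 3 then 3 else 0)"
proof -
  define D where "D = flip z u"
  have Ds: "D \<subseteq> {..<24}" unfolding D_def using flip_sub[OF zs C_subV[OF u]] .
  have fD: "finite D" using Ds finite_subset by blast
  have key: "\<And>k. card (flip {k} D) + 2 * (if k \<in> D then 1 else 0) = 1 + card D"
    using card_flip_single[OF fD] .
  have hz: "hamming_dist z u = card D" by (simp add: ham_card D_def)
  have iff: "\<And>k. halved_cube_adj (flip z {k}) u \<longleftrightarrow> card (flip {k} D) = 2"
    by (simp add: adj_flip_single_iff D_def)
  show ?thesis
  proof (cases "card D = 1")
    case True
    have "{k \<in> {..<24}. halved_cube_adj (flip z {k}) u} = {..<24} - D"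
    proof -
      have "\<And>k. card (flip {k} D) = 2 \<longleftrightarrow> k \<notin> D"
        subgoal for k using key[of k] True by (cases "k \<in> D") auto
        done
      then show ?thesis by (auto simp: iff)
    qed
    moreover have "card ({..<24::nat} - D) = 23" using Ds True by (simp add: card_Diff_subset fD)
    ultimately show ?thesis using hz True by simp
  next
    case F1: False
    show ?thesis
    proof (cases "card D = 3")
      case True
      have "{k \<in> {..<24}. halved_cube_adj (flip z {k}) u} = D"
      proof -
        have "\<And>k. card (flip {k} D) = 2 \<longleftrightarrow> k \<in> D"
          subgoal for k using key[of k] True by (cases "k \<in> D") auto
          done
        then show ?thesis using Ds by (auto simp: iff)
      qed
      then show ?thesis using hz True by simp
    next
      case False
      have "{k \<in> {..<24}. halved_cube_adj (flip z {k}) u} = {}"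
      proof -
        have "\<And>k. card (flip {k} D) \<noteq> 2"
          subgoal for k using key[of k] False F1 by (cases "k \<in> D") auto
          done
        then show ?thesis by (auto simp: iff)
      qed
      then show ?thesis using hz False F1 by simp
    qed
  qed
qed

lemma Z_M3:
  assumes zs: "z \<subseteq> {..<24}" and zo: "odd (card z)"
  shows "card (S3 z) + Nz z = 8 * c"
proof -
  let ?g = "\<lambda>u. (if hamming_dist z u = 1 then 23 else if hamming_dist z u = 3 then 3 else 0::nat)"
  have A: "(\<Sum>k\<in>{..<24}. card {u \<in> C. halved_cube_adj (flip z {k}) u}) = sum ?g C"
    by (rule sum_multicount_gen) (use finC count_k[OF zs] in auto)
  have B: "card {u \<in> C. halved_cube_adj (flip z {k}) u} = c + (if k \<in> Mem z then 20 else 0)"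
    if k: "k < 24" for k
  proof -
    have V: "flip z {k} \<in> V24" using oddz_flip_V[OF zs zo k] .
    show ?thesis
    proof (cases "flip z {k} \<in> C")
      case True then show ?thesis using inC[OF True] k by (simp add: Mem_def)
    next
      case False then show ?thesis using outC[of "flip z {k}"] V k by (simp add: Mem_def)
    qed
  qed
  have "(\<Sum>k\<in>{..<24}. card {u \<in> C. halved_cube_adj (flip z {k}) u})
      = (\<Sum>k\<in>{..<24::nat}. c + (if k \<in> Mem z then 20 else 0))"
    using B by (intro sum.cong) auto
  also have "\<dots> = 24 * c + (\<Sum>k\<in>{..<24::nat}. (if k \<in> Mem z then 20 else 0))"
    by (simp add: sum.distrib)
  also have "(\<Sum>k\<in>{..<24::nat}. (if k \<in> Mem z then 20 else 0)) = (\<Sum>k\<in>Mem z. (20::nat))"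
  proof -
    have "(\<Sum>k\<in>{..<24::nat}. (if k \<in> Mem z then 20 else 0::nat)) = (\<Sum>k\<in>{k\<in>{..<24}. k \<in> Mem z}. 20)"
      by (rule sum.inter_filter[symmetric]) simp
    moreover have "{k\<in>{..<24}. k \<in> Mem z} = Mem z" by (auto simp: Mem_def)
    ultimately show ?thesis by simp
  qed
  finally have L: "(\<Sum>k\<in>{..<24}. card {u \<in> C. halved_cube_adj (flip z {k}) u}) = 24 * c + 20 * Nz z"
    by (simp add: Nz_def)
  have G: "sum ?g C = 23 * card {u \<in> C. hamming_dist z u = 1} + 3 * card (S3 z)"
  proof -
    have "sum ?g C = (\<Sum>u\<in>C. (if hamming_dist z u = 1 then 23 else 0)) + (\<Sum>u\<in>C. (if hamming_dist z u = 3 then 3 else 0::nat))"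
      by (subst sum.distrib[symmetric]) (intro sum.cong, auto)
    also have "(\<Sum>u\<in>C. (if hamming_dist z u = 1 then 23 else 0::nat)) = (\<Sum>u\<in>{u \<in> C. hamming_dist z u = 1}. 23)"
      by (rule sum.inter_filter[symmetric, OF finC])
    also have "(\<Sum>u\<in>C. (if hamming_dist z u = 3 then 3 else 0::nat)) = (\<Sum>u\<in>S3 z. 3)"
      unfolding S3_def by (rule sum.inter_filter[symmetric, OF finC])
    finally show ?thesis by simp
  qed
  have "24 * c + 20 * Nz z = 23 * Nz z + 3 * card (S3 z)"
    using A L G card_Mem_ham1[OF zs] by (simp only:)
  then show ?thesis by presburger
qed

lemma adj3:
  assumes "finite D" "card D = 3" "D = flip z u"
  shows "halved_cube_adj (flip z {a}) u \<longleftrightarrow> a \<in> D"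
proof -
  have "card (flip {a} D) + 2 * (if a \<in> D then 1 else 0) = 1 + card D"
    using card_flip_single[OF assms(1)] .
  then have "card (flip {a} D) = 2 \<longleftrightarrow> a \<in> D" using assms(2) by (cases "a \<in> D") auto
  then show ?thesis by (simp add: adj_flip_single_iff assms(3))
qed

lemma flipD_fin:
  assumes zs: "z \<subseteq> {..<24}" and u: "u \<in> C"
  shows "flip z u \<subseteq> {..<24}" "finite (flip z u)"
  using flip_sub[OF zs C_subV[OF u]] finite_subset by auto

lemma Z_B:
  assumes zs: "z \<subseteq> {..<24}" and a: "a \<in> Mem z"
  shows "card (Bs z a) + Nz z = 21 + c"
proof -
  let ?m = "flip z {a}"
  have mC: "?m \<in> C" using a by (simp add: Mem_def)
  let ?T = "{u \<in> C. halved_cube_adj ?m u}"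
  let ?T1 = "{u \<in> C. halved_cube_adj ?m u \<and> hamming_dist z u = 1}"
  have T: "?T = Bs z a \<union> ?T1"
  proof (intro equalityI subsetI)
    fix u assume u: "u \<in> ?T"
    define D where "D = flip z u"
    have fD: "finite D" using flipD_fin[OF zs] u D_def by auto
    have "card (flip {a} D) + 2 * (if a \<in> D then 1 else 0) = 1 + card D"
      using card_flip_single[OF fD] .
    moreover have "card (flip {a} D) = 2" using u by (simp add: adj_flip_single_iff D_def)
    ultimately have "card D = 1 \<or> card D = 3" by (cases "a \<in> D") auto
    then show "u \<in> Bs z a \<union> ?T1" using u by (auto simp: Bs_def ham_card D_def)
  qed (auto simp: Bs_def)
  have disj: "Bs z a \<inter> ?T1 = {}" by (auto simp: Bs_def)
  have T1: "?T1 = (\<lambda>k. flip z {k}) ` (Mem z - {a})"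
  proof (intro equalityI subsetI)
    fix u assume u: "u \<in> ?T1"
    then obtain k where k: "flip z u = {k}" by (auto simp: ham_card card_1_singleton_iff)
    have ue: "u = flip z {k}" using k by (metis flip_flip2)
    have "k < 24" using flipD_fin[OF zs, of u] u k by auto
    moreover have "k \<noteq> a"
    proof
      assume "k = a"
      then have "hamming_dist ?m u = 0" using ue by (simp add: ham_card flip_cancel flip_def)
      then show False using u by (simp add: halved_cube_adj_def)
    qed
    ultimately show "u \<in> (\<lambda>k. flip z {k}) ` (Mem z - {a})" using u ue by (auto simp: Mem_def)
  next
    fix u assume "u \<in> (\<lambda>k. flip z {k}) ` (Mem z - {a})"
    then obtain k where k: "k \<in> Mem z" "k \<noteq> a" "u = flip z {k}" by blast
    have "hamming_dist ?m u = 2" using k by (simp add: ham_card flip_cancel flip_singles)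
    then show "u \<in> ?T1" using k by (auto simp: Mem_def halved_cube_adj_def ham_card)
  qed
  have inj: "inj_on (\<lambda>k. flip z {k}) (Mem z - {a})"
    by (rule inj_onI) (drule flip_inj, simp)
  have finM: "finite (Mem z)" by (simp add: Mem_def)
  have cT1: "card ?T1 + 1 = Nz z"
    using T1 card_image[OF inj] a finM by (simp add: Nz_def card_Diff_singleton)
    (metis Suc_pred card_gt_0_iff empty_iff)
  have "card ?T = card (Bs z a) + card ?T1"
    using T disj finC by (simp add: card_Un_disjoint Bs_def)
  then show ?thesis using inC[OF mC] cT1 by simp
qed

lemma Bs_char:
  assumes zs: "z \<subseteq> {..<24}"
  shows "u \<in> Bs z a \<longleftrightarrow> u \<in> C \<and> card (flip z u) = 3 \<and> a \<in> flip z u"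
proof
  assume u: "u \<in> Bs z a"
  then have uC: "u \<in> C" and c3: "card (flip z u) = 3" by (auto simp: Bs_def ham_card)
  have "finite (flip z u)" using flipD_fin[OF zs uC] by simp
  then have "a \<in> flip z u" using adj3[OF _ c3 refl] u by (simp add: Bs_def)
  then show "u \<in> C \<and> card (flip z u) = 3 \<and> a \<in> flip z u" using uC c3 by simp
next
  assume u: "u \<in> C \<and> card (flip z u) = 3 \<and> a \<in> flip z u"
  have "finite (flip z u)" using flipD_fin[OF zs] u by simp
  then show "u \<in> Bs z a" using adj3[OF _ _ refl, of z u a] u by (simp add: Bs_def ham_card)
qed

lemma three_elem:
  assumes "card D = 3" "a \<in> D" "b \<in> D" "a \<noteq> b"
  obtains m where "m \<notin> {a,b}" "D = {a,b,m}"
proof -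
  have fD: "finite D" using assms(1) by (metis card.infinite zero_neq_numeral)
  have "card (D - {a,b}) = 1" using assms fD by (simp add: card_Diff_subset)
  then obtain m where m: "D - {a,b} = {m}" by (auto simp: card_1_singleton_iff)
  then have "D = {a,b,m}" using assms by blast
  moreover have "m \<notin> {a,b}" using m by blast
  ultimately show ?thesis using that by blast
qed

lemma Z_ov:
  assumes zs: "z \<subseteq> {..<24}" and a: "a \<in> Mem z" and b: "b \<in> Mem z" and ab: "a \<noteq> b"
  shows "card (Bs z a \<inter> Bs z b) + 2 = Nz (flip z {a,b})"
proof -
  define W where "W = {m. m < 24 \<and> m \<noteq> a \<and> m \<noteq> b \<and> flip z {a,b,m} \<in> C}"
  have a24: "a < 24" and b24: "b < 24" using a b by (auto simp: Mem_def)
  have eq1: "Bs z a \<inter> Bs z b = (\<lambda>m. flip z {a,b,m}) ` W"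
  proof (intro equalityI subsetI)
    fix u assume u: "u \<in> Bs z a \<inter> Bs z b"
    then have uC: "u \<in> C" and c3: "card (flip z u) = 3" and ia: "a \<in> flip z u" and ib: "b \<in> flip z u"
      using Bs_char[OF zs] by auto
    obtain m where m: "m \<notin> {a,b}" "flip z u = {a,b,m}" using three_elem[OF c3 ia ib ab] by blast
    have "m < 24" using flipD_fin[OF zs uC] m(2) by auto
    moreover have "u = flip z {a,b,m}" using m(2) by (metis flip_flip2)
    ultimately show "u \<in> (\<lambda>m. flip z {a,b,m}) ` W" using m(1) uC by (auto simp: W_def)
  next
    fix u assume "u \<in> (\<lambda>m. flip z {a,b,m}) ` W"
    then obtain m where m: "m < 24" "m \<noteq> a" "m \<noteq> b" "flip z {a,b,m} \<in> C" "u = flip z {a,b,m}"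
      by (auto simp: W_def)
    have "flip z u = {a,b,m}" using m(5) by simp
    moreover have "card {a,b,m} = 3" using m ab by auto
    ultimately show "u \<in> Bs z a \<inter> Bs z b" using Bs_char[OF zs] m by auto
  qed
  have inj: "inj_on (\<lambda>m. flip z {a,b,m}) W"
  proof (rule inj_onI)
    fix m m' assume mm: "m \<in> W" "m' \<in> W" "flip z {a,b,m} = flip z {a,b,m'}"
    have "{a,b,m} = {a,b,m'}" by (rule flip_inj[OF mm(3)])
    then show "m = m'" using mm(1,2) by (auto simp: W_def)
  qed
  have eq2: "Mem (flip z {a,b}) = {a,b} \<union> W"
  proof (intro equalityI subsetI)
    fix k assume k: "k \<in> Mem (flip z {a,b})"
    show "k \<in> {a,b} \<union> W"
    proof (cases "k \<in> {a,b}")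
      case True then show ?thesis by blast
    next
      case False
      have "flip (flip z {a,b}) {k} = flip z {a,b,k}" using False by (auto simp: flip_def)
      then show ?thesis using k False by (auto simp: Mem_def W_def)
    qed
  next
    fix k assume k: "k \<in> {a,b} \<union> W"
    show "k \<in> Mem (flip z {a,b})"
    proof (cases "k = a")
      case True
      have "flip (flip z {a,b}) {k} = flip z {b}" using True ab by (auto simp: flip_def)
      then show ?thesis using b a24 True by (simp add: Mem_def)
    next
      case F: False
      show ?thesis
      proof (cases "k = b")
        case True
        have "flip (flip z {a,b}) {k} = flip z {a}" using True ab by (auto simp: flip_def)
        then show ?thesis using a b24 True by (simp add: Mem_def)
      next
        case False
        have "flip (flip z {a,b}) {k} = flip z {a,b,k}" using False F by (auto simp: flip_def)
        then show ?thesis using k F False by (auto simp: Mem_def W_def)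
      qed
    qed
  qed
  have finW: "finite W" by (simp add: W_def)
  have "Nz (flip z {a,b}) = card ({a,b} \<union> W)" by (simp add: Nz_def eq2)
  also have "\<dots> = 2 + card W" using finW ab by (subst card_Un_disjoint) (auto simp: W_def)
  finally show ?thesis using eq1 card_image[OF inj] by simp
qed

lemma Z_3:
  assumes zs: "z \<subseteq> {..<24}" and ab: "a \<noteq> b" and ae: "a \<noteq> e" and be: "b \<noteq> e"
  shows "card (Bs z a \<inter> Bs z b) + card (Bs z a \<inter> Bs z e) \<le> card (Bs z a) + 1"
proof -
  have fin: "finite (Bs z a)" using finC by (simp add: Bs_def)
  have tri: "(Bs z a \<inter> Bs z b) \<inter> (Bs z a \<inter> Bs z e) \<subseteq> {flip z {a,b,e}}"
  proof
    fix u assume u: "u \<in> (Bs z a \<inter> Bs z b) \<inter> (Bs z a \<inter> Bs z e)"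
    then have c3: "card (flip z u) = 3" and "a \<in> flip z u" "b \<in> flip z u" "e \<in> flip z u"
      using Bs_char[OF zs] by auto
    then have sub: "{a,b,e} \<subseteq> flip z u" by auto
    have "card {a,b,e} = 3" using ab ae be by auto
    moreover have "finite (flip z u)" using c3 by (metis card.infinite zero_neq_numeral)
    ultimately have "{a,b,e} = flip z u" using sub c3 by (intro card_subset_eq) auto
    then have "u = flip z {a,b,e}" by (metis flip_flip2)
    then show "u \<in> {flip z {a,b,e}}" by simp
  qed
  have "card ((Bs z a \<inter> Bs z b) \<inter> (Bs z a \<inter> Bs z e)) \<le> 1"
    using card_mono[OF _ tri] by simp
  moreover have "card ((Bs z a \<inter> Bs z b) \<union> (Bs z a \<inter> Bs z e)) \<le> card (Bs z a)"
    using fin by (intro card_mono) auto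
  moreover have "card ((Bs z a \<inter> Bs z b) \<union> (Bs z a \<inter> Bs z e)) + card ((Bs z a \<inter> Bs z b) \<inter> (Bs z a \<inter> Bs z e))
      = card (Bs z a \<inter> Bs z b) + card (Bs z a \<inter> Bs z e)"
    using fin by (intro card_Un_Int[symmetric]) auto
  ultimately show ?thesis by linarith
qed

end

context pc begin

definition Nb :: "nat set \<Rightarrow> nat \<Rightarrow> nat set" where
  "Nb x i = {j. j < 24 \<and> j \<noteq> i \<and> flip x {i,j} \<in> C}"

lemma deg_Nb: "deg x i = card (Nb x i)" by (simp add: deg_def Nb_def)

lemma flip_single_twice: "i \<noteq> j \<Longrightarrow> flip (flip x {i}) {j} = flip x {i,j}"
  by (auto simp: flip_def)

lemma X_N:
  assumes x: "x \<in> C" and j: "j < 24"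
  shows "Nz (flip x {j}) = 1 + deg x j"
proof -
  have "Mem (flip x {j}) = insert j (Nb x j)"
  proof (intro equalityI subsetI)
    fix k assume k: "k \<in> Mem (flip x {j})"
    show "k \<in> insert j (Nb x j)"
    proof (cases "k = j")
      case True then show ?thesis by simp
    next
      case False
      then show ?thesis using k flip_single_twice[of j k x] by (auto simp: Mem_def Nb_def)
    qed
  next
    fix k assume k: "k \<in> insert j (Nb x j)"
    show "k \<in> Mem (flip x {j})"
    proof (cases "k = j")
      case True then show ?thesis using x j by (simp add: Mem_def)
    next
      case False
      then show ?thesis using k flip_single_twice[of j k x] by (auto simp: Mem_def Nb_def)
    qed
  qed
  moreover have "j \<notin> Nb x j" by (simp add: Nb_def)
  moreover have "finite (Nb x j)" by (simp add: Nb_def)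
  ultimately show ?thesis by (simp add: Nz_def deg_Nb)
qed

lemma z_ok:
  assumes x: "x \<in> C" and S: "S \<subseteq> {..<24}" "odd (card S)"
  shows "flip x S \<subseteq> {..<24}" "odd (card (flip x S))"
proof -
  have xV: "x \<in> V24" using x C_sub by auto
  then have xs: "x \<subseteq> {..<24}" and xe: "even (card x)" by (auto simp: V_iff)
  show "flip x S \<subseteq> {..<24}" using flip_sub[OF xs S(1)] .
  have "card (flip x S) + 2 * card (x \<inter> S) = card x + card S"
    using card_flip[of x S] xs S(1) finite_subset by auto
  then show "odd (card (flip x S))" using xe S(2) by presburger
qed

lemma UB:
  assumes zs: "z \<subseteq> {..<24}" and ms: "set ms \<subseteq> Mem z"
  shows "(\<Sum>m\<leftarrow>ms. card (Bs z m)) \<le> card (S3 z) + pairsum (map (Bs z) ms)"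
proof -
  have fin: "\<forall>X\<in>set (map (Bs z) ms). finite X" using finC by (auto simp: Bs_def)
  have "(\<Sum>X\<leftarrow>map (Bs z) ms. card X) \<le> card (\<Union>(set (map (Bs z) ms))) + pairsum (map (Bs z) ms)"
    using bonf[OF fin] .
  moreover have "\<Union>(set (map (Bs z) ms)) \<subseteq> S3 z" by (auto simp: Bs_def S3_def)
  then have "card (\<Union>(set (map (Bs z) ms))) \<le> card (S3 z)"
    using finC by (intro card_mono) (auto simp: S3_def)
  ultimately show ?thesis by (simp add: comp_def)
qed

lemma Mem_flip1:
  assumes x: "x \<in> C" and i: "i < 24"
  shows "Mem (flip x {i}) = insert i (Nb x i)"
proof (intro equalityI subsetI)
  fix k assume k: "k \<in> Mem (flip x {i})"
  show "k \<in> insert i (Nb x i)"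
  proof (cases "k = i")
    case True then show ?thesis by simp
  next
    case False
    then show ?thesis using k flip_single_twice[of i k x] by (auto simp: Mem_def Nb_def)
  qed
next
  fix k assume k: "k \<in> insert i (Nb x i)"
  show "k \<in> Mem (flip x {i})"
  proof (cases "k = i")
    case True then show ?thesis using x i by (simp add: Mem_def)
  next
    case False
    then show ?thesis using k flip_single_twice[of i k x] by (auto simp: Mem_def Nb_def)
  qed
qed

lemma local_facts:
  assumes c7: "c = 7" and x: "x \<in> C" and i: "i < 24"
  defines "z \<equiv> flip x {i}"
  shows "z \<subseteq> {..<24}"
    and "Mem z = insert i (Nb x i)"
    and "\<And>m. m \<in> insert i (Nb x i) \<Longrightarrow> card (Bs z m) + deg x i = 27"
    and "card (S3 z) + deg x i = 55"
    and "\<And>j. j \<in> Nb x i \<Longrightarrow> card (Bs z i \<inter> Bs z j) + 1 = deg x j"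
    and "\<And>j k. j \<in> Nb x i \<Longrightarrow> k \<in> Nb x i \<Longrightarrow> j \<noteq> k \<Longrightarrow>
           card (Bs z j \<inter> Bs z k) \<le> 5 \<or> card (Bs z j \<inter> Bs z k) = 22"
proof -
  have S1: "{i} \<subseteq> {..<24}" "odd (card {i})" using i by auto
  note zok = z_ok[OF x S1, folded z_def]
  show zs: "z \<subseteq> {..<24}" using zok(1) .
  show M: "Mem z = insert i (Nb x i)" unfolding z_def using Mem_flip1[OF x i] .
  have N: "Nz z = 1 + deg x i" unfolding z_def using X_N[OF x i] .
  show "card (Bs z m) + deg x i = 27" if "m \<in> insert i (Nb x i)" for m
    using Z_B[OF zs, of m] that M N c7 by simp
  show "card (S3 z) + deg x i = 55" using Z_M3[OF zok] N c7 by simp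
  show "card (Bs z i \<inter> Bs z j) + 1 = deg x j" if j: "j \<in> Nb x i" for j
  proof -
    have ji: "j \<noteq> i" "j < 24" using j by (auto simp: Nb_def)
    have "card (Bs z i \<inter> Bs z j) + 2 = Nz (flip z {i,j})"
      using Z_ov[OF zs, of i j] M j ji by auto
    moreover have "flip z {i,j} = flip x {j}" using ji by (auto simp: z_def flip_def)
    ultimately show ?thesis using X_N[OF x ji(2)] by simp
  qed
  show "card (Bs z j \<inter> Bs z k) \<le> 5 \<or> card (Bs z j \<inter> Bs z k) = 22"
    if j: "j \<in> Nb x i" and k: "k \<in> Nb x i" and jk: "j \<noteq> k" for j k
  proof -
    have ji: "j \<noteq> i" "j < 24" "k \<noteq> i" "k < 24" using j k by (auto simp: Nb_def)
    have "card (Bs z j \<inter> Bs z k) + 2 = Nz (flip z {j,k})"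
      using Z_ov[OF zs, of j k] M j k jk by auto
    moreover have "flip z {j,k} = flip x {i,j,k}" using ji jk by (auto simp: z_def flip_def)
    moreover have "Nz (flip x {i,j,k}) \<le> 7 \<or> Nz (flip x {i,j,k}) = 24"
    proof -
      have S3': "{i,j,k} \<subseteq> {..<24}" "odd (card {i,j,k})" using ji jk i by auto
      show ?thesis using Z_N[OF z_ok[OF x S3']] c7 by simp
    qed
    ultimately show ?thesis by auto
  qed
qed

lemma KEY3:
  assumes c7: "c = 7" and x: "x \<in> C" and all4: "\<forall>v<24. deg x v \<le> 4"
    and i: "i < 24" and d3: "deg x i = 3"
  shows False
proof -
  define z where "z = flip x {i}"
  note LF = local_facts[OF c7 x i, folded z_def]
  obtain j1 j2 j3 where J: "Nb x i = {j1,j2,j3}" "j1 \<noteq> j2" "j2 \<noteq> j3" "j1 \<noteq> j3"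
    using d3 by (auto simp: deg_Nb card_3_iff)
  have jn: "j1 \<in> Nb x i" "j2 \<in> Nb x i" "j3 \<in> Nb x i" using J by auto
  have ji: "j1 \<noteq> i" "j2 \<noteq> i" "j3 \<noteq> i" "j1 < 24" "j2 < 24" "j3 < 24" using jn by (auto simp: Nb_def)
  have ms: "set [i,j1,j2,j3] \<subseteq> Mem z" using LF(2) J by auto
  have U: "(\<Sum>m\<leftarrow>[i,j1,j2,j3]. card (Bs z m)) \<le> card (S3 z) + pairsum (map (Bs z) [i,j1,j2,j3])"
    using UB[OF LF(1) ms] .
  have cB: "card (Bs z i) = 24" "card (Bs z j1) = 24" "card (Bs z j2) = 24" "card (Bs z j3) = 24"
    using LF(3)[of i] LF(3)[of j1] LF(3)[of j2] LF(3)[of j3] J d3 by auto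
  have cS: "card (S3 z) = 52" using LF(4) d3 by simp
  have s1: "card (Bs z i \<inter> Bs z j1) \<le> 3" using LF(5)[OF jn(1)] all4 ji by fastforce
  have s2: "card (Bs z i \<inter> Bs z j2) \<le> 3" using LF(5)[OF jn(2)] all4 ji by fastforce
  have s3: "card (Bs z i \<inter> Bs z j3) \<le> 3" using LF(5)[OF jn(3)] all4 ji by fastforce
  have o12: "card (Bs z j1 \<inter> Bs z j2) \<le> 5 \<or> card (Bs z j1 \<inter> Bs z j2) = 22" using LF(6)[OF jn(1) jn(2)] J by simp
  have o13: "card (Bs z j1 \<inter> Bs z j3) \<le> 5 \<or> card (Bs z j1 \<inter> Bs z j3) = 22" using LF(6)[OF jn(1) jn(3)] J by simp
  have o23: "card (Bs z j2 \<inter> Bs z j3) \<le> 5 \<or> card (Bs z j2 \<inter> Bs z j3) = 22" using LF(6)[OF jn(2) jn(3)] J by simp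
  have t1: "card (Bs z j1 \<inter> Bs z j2) + card (Bs z j1 \<inter> Bs z j3) \<le> 25"
    using Z_3[OF LF(1), of j1 j2 j3] J cB by simp
  have t2: "card (Bs z j1 \<inter> Bs z j2) + card (Bs z j2 \<inter> Bs z j3) \<le> 25"
    using Z_3[OF LF(1), of j2 j1 j3] J cB by (simp add: Int_commute)
  have t3: "card (Bs z j1 \<inter> Bs z j3) + card (Bs z j2 \<inter> Bs z j3) \<le> 25"
    using Z_3[OF LF(1), of j3 j1 j2] J cB by (simp add: Int_commute)
  have P: "pairsum (map (Bs z) [i,j1,j2,j3]) = card (Bs z i \<inter> Bs z j1) + card (Bs z i \<inter> Bs z j2)
     + card (Bs z i \<inter> Bs z j3) + card (Bs z j1 \<inter> Bs z j2) + card (Bs z j1 \<inter> Bs z j3) + card (Bs z j2 \<inter> Bs z j3)"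
    by simp
  have "96 \<le> 52 + pairsum (map (Bs z) [i,j1,j2,j3])" using U cB cS by simp
  then show False using P s1 s2 s3 o12 o13 o23 t1 t2 t3 by linarith
qed

lemma KEY4:
  assumes c7: "c = 7" and x: "x \<in> C" and all4: "\<forall>v<24. deg x v \<le> 4"
    and i: "i < 24" and d4: "deg x i = 4"
    and p: "p \<in> Nb x i" and q: "q \<in> Nb x i" and pq: "p \<noteq> q"
    and dp: "deg x p = 4" and dq: "deg x q = 4"
  shows False
proof -
  define z where "z = flip x {i}"
  note LF = local_facts[OF c7 x i, folded z_def]
  have finNb: "finite (Nb x i)" by (simp add: Nb_def)
  have "card (Nb x i - {p,q}) = 2" using d4 p q pq finNb by (simp add: deg_Nb card_Diff_subset)
  then obtain a b where ab: "Nb x i - {p,q} = {a,b}" "a \<noteq> b" by (auto simp: card_2_iff)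
  have J: "Nb x i = {p,q,a,b}" using ab p q by blast
  have dist: "a \<noteq> p" "a \<noteq> q" "b \<noteq> p" "b \<noteq> q" using ab by blast+
  have jn: "p \<in> Nb x i" "q \<in> Nb x i" "a \<in> Nb x i" "b \<in> Nb x i" using J by auto
  have ji: "a \<noteq> i" "b \<noteq> i" "a < 24" "b < 24" "p \<noteq> i" "q \<noteq> i" using jn by (auto simp: Nb_def)
  let ?ms = "[i,p,q,a,b]"
  have ms: "set ?ms \<subseteq> Mem z" using LF(2) J by auto
  have U: "(\<Sum>m\<leftarrow>?ms. card (Bs z m)) \<le> card (S3 z) + pairsum (map (Bs z) ?ms)"
    using UB[OF LF(1) ms] .
  have cB: "card (Bs z i) = 23" "card (Bs z p) = 23" "card (Bs z q) = 23" "card (Bs z a) = 23" "card (Bs z b) = 23"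
    using LF(3)[of i] LF(3)[of p] LF(3)[of q] LF(3)[of a] LF(3)[of b] jn d4 by auto
  have cS: "card (S3 z) = 51" using LF(4) d4 by simp
  have sp: "card (Bs z i \<inter> Bs z p) = 3" using LF(5)[OF jn(1)] dp by simp
  have sq: "card (Bs z i \<inter> Bs z q) = 3" using LF(5)[OF jn(2)] dq by simp
  have sa: "card (Bs z i \<inter> Bs z a) \<le> 3" using LF(5)[OF jn(3)] all4 ji by fastforce
  have sb: "card (Bs z i \<inter> Bs z b) \<le> 3" using LF(5)[OF jn(4)] all4 ji by fastforce
  have small_p: "card (Bs z p \<inter> Bs z y) \<le> 5" if y: "y \<in> Nb x i" "y \<noteq> p" for y
  proof -
    have yi: "y \<noteq> i" using y by (simp add: Nb_def)
    have "card (Bs z p \<inter> Bs z y) + card (Bs z p \<inter> Bs z i) \<le> card (Bs z p) + 1"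
      using Z_3[OF LF(1), of p y i] y yi ji by auto
    then have "card (Bs z p \<inter> Bs z y) \<le> 21" using cB sp by (simp add: Int_commute)
    then show ?thesis using LF(6)[OF jn(1) y(1)] y by auto
  qed
  have small_q: "card (Bs z q \<inter> Bs z y) \<le> 5" if y: "y \<in> Nb x i" "y \<noteq> q" for y
  proof -
    have yi: "y \<noteq> i" using y by (simp add: Nb_def)
    have "card (Bs z q \<inter> Bs z y) + card (Bs z q \<inter> Bs z i) \<le> card (Bs z q) + 1"
      using Z_3[OF LF(1), of q y i] y yi ji by auto
    then have "card (Bs z q \<inter> Bs z y) \<le> 21" using cB sq by (simp add: Int_commute)
    then show ?thesis using LF(6)[OF jn(2) y(1)] y by auto
  qed
  have o1: "card (Bs z p \<inter> Bs z q) \<le> 5" using small_p[OF jn(2)] pq by simp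
  have o2: "card (Bs z p \<inter> Bs z a) \<le> 5" using small_p[OF jn(3)] dist by simp
  have o3: "card (Bs z p \<inter> Bs z b) \<le> 5" using small_p[OF jn(4)] dist by simp
  have o4: "card (Bs z q \<inter> Bs z a) \<le> 5" using small_q[OF jn(3)] dist by simp
  have o5: "card (Bs z q \<inter> Bs z b) \<le> 5" using small_q[OF jn(4)] dist by simp
  have o6: "card (Bs z a \<inter> Bs z b) \<le> 22" using LF(6)[OF jn(3) jn(4) ab(2)] by linarith
  have P: "pairsum (map (Bs z) ?ms) = card (Bs z i \<inter> Bs z p) + card (Bs z i \<inter> Bs z q)
     + card (Bs z i \<inter> Bs z a) + card (Bs z i \<inter> Bs z b) + card (Bs z p \<inter> Bs z q) + card (Bs z p \<inter> Bs z a)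
     + card (Bs z p \<inter> Bs z b) + card (Bs z q \<inter> Bs z a) + card (Bs z q \<inter> Bs z b) + card (Bs z a \<inter> Bs z b)"
    by simp
  have "115 \<le> 51 + pairsum (map (Bs z) ?ms)" using U cB cS by simp
  then show False using P sp sq sa sb o1 o2 o3 o4 o5 o6 by linarith
qed

lemma c7_universal:
  assumes c7: "c = 7" and x: "x \<in> C"
  shows "\<exists>v<24. deg x v = 23"
proof (rule ccontr)
  assume H: "\<not> (\<exists>v<24. deg x v = 23)"
  have all4: "\<forall>v<24. deg x v \<le> 4"
  proof (rule graph_max4[where E = "\<lambda>i j. flip x {i,j} \<in> C"])
    show "\<And>i j. (flip x {i,j} \<in> C) = (flip x {j,i} \<in> C)" by (simp add: insert_commute)
    show "\<And>i. i < 24 \<Longrightarrow> deg x i = card {j. j < 24 \<and> j \<noteq> i \<and> flip x {i,j} \<in> C}"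
      by (simp add: deg_def)
    show "(\<Sum>i<24. deg x i) = 54" using deg_sum[OF x] c7 by simp
    show "\<And>i j. i < 24 \<Longrightarrow> j < 24 \<Longrightarrow> i \<noteq> j \<Longrightarrow> flip x {i,j} \<notin> C \<Longrightarrow> 1 + deg x i + deg x j \<le> 7"
      using nonedge[OF x] c7 by blast
    show "\<not> (\<exists>v<24. deg x v = 23)" by fact
  qed
  have no3: "deg x v \<noteq> 3" if "v < 24" for v
    using KEY3[OF c7 x all4 that] by blast
  define H4 where "H4 = {v. v < 24 \<and> deg x v = 4}"
  have finH4: "finite H4" by (simp add: H4_def)
  have "(\<Sum>v<24. deg x v) \<le> (\<Sum>v<24::nat. 2 + (if v \<in> H4 then 2 else 0))"
  proof (rule sum_mono)
    fix v assume v: "v \<in> {..<24::nat}"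
    then have "deg x v \<le> 4" "deg x v \<noteq> 3" using all4 no3 by auto
    then show "deg x v \<le> 2 + (if v \<in> H4 then 2 else 0)" using v by (auto simp: H4_def)
  qed
  also have "\<dots> = 48 + 2 * card H4"
  proof -
    have "(\<Sum>v<24::nat. (if v \<in> H4 then 2 else 0::nat)) = (\<Sum>v\<in>{v\<in>{..<24}. v \<in> H4}. 2)"
      by (rule sum.inter_filter[symmetric]) simp
    moreover have "{v\<in>{..<24}. v \<in> H4} = H4" by (auto simp: H4_def)
    ultimately have "(\<Sum>v<24::nat. (if v \<in> H4 then 2 else 0::nat)) = 2 * card H4" by simp
    then show ?thesis by (simp only: sum.distrib) simp
  qed
  finally have "3 \<le> card H4" using deg_sum[OF x] c7 by simp
  then obtain i where i: "i \<in> H4" by (metis card.empty empty_iff not_numeral_le_zero subsetI subset_antisym)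
  have "2 \<le> card (H4 - {i})" using \<open>3 \<le> card H4\<close> i finH4 by (simp add: card_Diff_singleton)
  then obtain p where p: "p \<in> H4 - {i}" by (metis card.empty empty_iff not_numeral_le_zero subsetI subset_antisym)
  have "1 \<le> card (H4 - {i} - {p})" using \<open>2 \<le> card (H4 - {i})\<close> p finH4 by (simp add: card_Diff_singleton)
  then obtain q where q: "q \<in> H4 - {i} - {p}" by (metis card.empty empty_iff le_zero_eq one_neq_zero subsetI subset_antisym)
  have ii: "i < 24" "deg x i = 4" and pp: "p < 24" "deg x p = 4" "p \<noteq> i"
    and qq: "q < 24" "deg x q = 4" "q \<noteq> i" "q \<noteq> p" using i p q by (auto simp: H4_def)
  have adj: "flip x {i,y} \<in> C" if "y < 24" "deg x y = 4" "y \<noteq> i" for y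
  proof (rule ccontr)
    assume "flip x {i,y} \<notin> C"
    then have "1 + deg x i + deg x y \<le> 7" using nonedge[OF x ii(1) that(1)] that c7 by auto
    then show False using ii that by simp
  qed
  have pN: "p \<in> Nb x i" using adj[OF pp(1,2,3)] pp by (simp add: Nb_def)
  have qN: "q \<in> Nb x i" using adj[OF qq(1,2,3)] qq by (simp add: Nb_def)
  show False using KEY4[OF c7 x all4 ii(1) ii(2) pN qN qq(4)[symmetric] pp(2) qq(2)] .
qed

end

theorem theorem2:
  fixes c :: nat
  assumes "c \<in> {1, 2, 4, 5, 7}"
  shows "\<not> (\<exists>C. perfect_coloring (halved_cube_vertices 24) halved_cube_adj C
                  (20 + c) (256 - c) c (276 - c))"
proof
  assume "\<exists>C. perfect_coloring (halved_cube_vertices 24) halved_cube_adj C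
                  (20 + c) (256 - c) c (276 - c)"
  then obtain C where PC: "perfect_coloring (halved_cube_vertices 24) halved_cube_adj C
                  (20 + c) (256 - c) c (276 - c)" by blast
  interpret pc C c using PC by unfold_locales
  show False using main_contra[OF assms] c7_universal by blast
qed

end
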